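(* Let $S$ be a pair of pants and $\pi$ a convex projective structure on $S$, with Goldman internal parameters $s,t>0$ and Fock–Goncharov coordinates $\tau_{111}(T_\pm)$, $\sigma_1(B_j),\sigma_2(B_j)$ (as defined in the context). Then $$s=\exp\Big(\tfrac16\big(\sigma_1(B_1)+\sigma_1(B_2)+\sigma_1(B_3)-\sigma_2(B_1)-\sigma_2(B_2)-\sigma_2(B_3)\big)\Big)$$ and $$t=e^{-\tau_{111}(T_+)}\big(e^{-\sigma_2(B_2)}+1\big)\big(e^{-\sigma_2(B_3)}+1\big)\big(e^{\sigma_1(B_3)}+1\big)^{-1}.$$
   Context: $S$ is a compact oriented pair of pants with boundary components $A_1,A_2,A_3$, each oriented opposite to the boundary orientation (and regarded as conjugacy classes in $\pi_1(S)$). A convex projective structure $\pi$ has a developing map $\widetilde S\to\mathbb{RP}^2$ (homeomorphism onto a convex domain) equivariant under a monodromy $\rho_\pi\colon\pi_1(S)\to\mathrm{SL}_3(\mathbb{R})$. The eigenvalues of $\rho_\pi(A_i)$ are real with $0<\lambda_i<\mu_i<\nu_i$; set $\tau_i=\mu_i+\nu_i$. The unstable flag of $\rho_\pi(A_i)$ is: line = $\lambda_i$-eigenline, plane = span of the $\lambda_i$- and $\mu_i$-eigenlines. Identify the interior of $S$ with $S^2-\{p_1,p_2,p_3\}$, $p_i$ corresponding to $A_i$, decomposed into ideal triangles $T_+,T_-$ glued along disjoint lines $B_1,B_2,B_3$, where $B_i$ goes (and is oriented) from $p_{i-1}$ to $p_{i+1}$ (indices mod 3), and $p_1,p_2,p_3$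 occur clockwise around $T_+$ (counterclockwise around $T_-$). Goldman's internal parameters: after isotopy, the developing map sends each lift of $T_\pm$ to a geometric triangle in $\mathbb{RP}^2$ minus its vertices, each vertex being the repelling fixed point (the $\lambda_i$-eigenline) of $\rho_\pi$ of a conjugate of some $A_i$. Choose a lift $\widetilde T_+$ and let $\widetilde T_1,\widetilde T_2,\widetilde T_3$ be the lifts of $T_-$ adjacent to it along the sides lifting $B_1,B_2,B_3$; normalize so that the vertices of $\mathrm{dev}(\widetilde T_+)$ fixed by $\rho_\pi(A_1),\rho_\pi(A_2),\rho_\pi(A_3)$ are $[1,0,0],[0,1,0],[0,0,1]$. Then the remaining vertices of $\mathrm{dev}(\widetilde T_1),\mathrm{dev}(\widetilde T_2),\mathrm{dev}(\widetilde T_3)$ are $[-1,b_1,c_1],[a_2,-1,c_2],[a_3,b_3,-1]$ with $a_i,b_i,c_i>0$. Define $t=a_2b_3/a_3$, and $s>0$ as the unique positive solution of $b_3c_2=1+\tau_1\sqrt{\lambda_1\lambda_3/\lambda_2}\,s+(\lambda_3/\lambda_2)s^2$ (equivalently of $a_3c_1=1+\tau_2\sqrt{\lambda_1\lambda_2/\lambda_3}\,s+(\lambda_1/\lambda_3)s^2$, or of $a_2b_1=1+\tau_3\sqrt{\lambda_2\lambda_3/\lambda_1}\,s+(\lambda_2/\lambda_1)s^2$). Fock–Goncharov coordinates: to each vertex of a lift of $T_\pm$, fixed by a conjugate $gA_jg^{-1}$, assign the unstable flag of $\rho_\pi(gA_jg^{-1})$. For a flag $F$, $f^{(a)}$ is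 any nonzero element of $\Lambda^aF^{(a)}$; degree-3 wedges are identified with numbers via a volume form. If $\widetilde T_+$ has vertex flags $F_1,F_2,F_3$ (vertices fixed by conjugates of $A_1,A_2,A_3$, clockwise in this order), $\tau_{111}(T_+)=\log\Big(\frac{f_1^{(2)}\wedge f_2^{(1)}}{f_2^{(1)}\wedge f_3^{(2)}}\frac{f_1^{(1)}\wedge f_3^{(2)}}{f_1^{(1)}\wedge f_2^{(2)}}\frac{f_2^{(2)}\wedge f_3^{(1)}}{f_1^{(2)}\wedge f_3^{(1)}}\Big)$; similarly, for $\widetilde T_-$ with vertex flags $F_1',F_2',F_3'$ (counterclockwise in this order), $\tau_{111}(T_-)=\log\Big(\frac{f_1'^{(2)}\wedge f_3'^{(1)}}{f_2'^{(2)}\wedge f_3'^{(1)}}\frac{f_1'^{(1)}\wedge f_2'^{(2)}}{f_1'^{(1)}\wedge f_3'^{(2)}}\frac{f_2'^{(1)}\wedge f_3'^{(2)}}{f_1'^{(2)}\wedge f_2'^{(1)}}\Big)$. For a lift $\widetilde B_i$ with adjacent lifts $\widetilde T_\pm$, let $F_{i+1},F_{i-1}$ be the flags at its positive and negative endpoints, $F_i$ the flag at the third vertex of $\widetilde T_+$, $F_i'$ that at the third vertex of $\widetilde T_-$; then $\sigma_1(B_i)=\log\Big(-\frac{f_{i+1}^{(1)}\wedge f_{i-1}^{(1)}\wedge f_i^{(1)}}{f_{i+1}^{(1)}\wedge f_{i-1}^{(1)}\wedge f_i'^{(1)}}\frac{f_{i-1}^{(2)}\wedge f_i'^{(1)}}{f_{i-1}^{(2)}\wedge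 f_i^{(1)}}\Big)$ and $\sigma_2(B_i)=\log\Big(-\frac{f_{i+1}^{(1)}\wedge f_{i-1}^{(1)}\wedge f_i'^{(1)}}{f_{i+1}^{(1)}\wedge f_{i-1}^{(1)}\wedge f_i^{(1)}}\frac{f_{i+1}^{(2)}\wedge f_i^{(1)}}{f_{i+1}^{(2)}\wedge f_i'^{(1)}}\Big)$. *)

theory Defs
  imports "HOL-Analysis.Analysis"
begin

(* Volume form on R^3: degree-3 wedges are identified with numbers via det. *)
definition vol3 :: "real^3 \<Rightarrow> real^3 \<Rightarrow> real^3 \<Rightarrow> real" where
  "vol3 u v w = det (vector [u, v, w] :: real^3^3)"

(* A flag (line, plane) in R^3, represented by (x, p, q): the line is spanned by x,
   the plane by p and q.  f^(1) = x, f^(2) = p \<and> q. *)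
type_synonym flag = "(real^3) \<times> (real^3) \<times> (real^3)"

definition fl :: "flag \<Rightarrow> real^3" where "fl F = fst F"

(* f^(2) \<and> x  (= x \<and> f^(2), degree 2*1 is even) *)
definition w2 :: "flag \<Rightarrow> real^3 \<Rightarrow> real" where
  "w2 F x = vol3 x (fst (snd F)) (snd (snd F))"

definition ee1 :: "real^3" where "ee1 = vector [1, 0, 0]"
definition ee2 :: "real^3" where "ee2 = vector [0, 1, 0]"
definition ee3 :: "real^3" where "ee3 = vector [0, 0, 1]"

(* Hence the unstable flag of A is
   (line x, plane span{x,y}) = (x, x, y). *)
definition unstable_data ::
  "real^3^3 \<Rightarrow> real^3 \<Rightarrow> real^3 \<Rightarrow> real \<Rightarrow> real \<Rightarrow> real \<Rightarrow> bool" where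
  "unstable_data A x y l m n \<longleftrightarrow>
     0 < l \<and> l < m \<and> m < n \<and> x \<noteq> 0 \<and> y \<noteq> 0 \<and>
     A *v x = l *\<^sub>R x \<and> A *v y = m *\<^sub>R y \<and> (\<exists>z. z \<noteq> 0 \<and> A *v z = n *\<^sub>R z)"

(* Goldman's normalized configuration of a convex projective structure on the pair of pants:
   A1 A2 A3 are rho(A_1), rho(A_2), rho(A_3) for the representatives fixing the vertices
   [1,0,0],[0,1,0],[0,0,1] of dev(T_+); v1 = [-1,b1,c1], v2 = [a2,-1,c2], v3 = [a3,b3,-1]
   are the third vertices of dev(T_1), dev(T_2), dev(T_3).  The deck transformation A_i
   carries the T_- lift adjacent to T_+ on one side of vertex p_i to the one on the
   other side (as triangles, i.e. with positive scalars):
     A1: T_2 -> T_3,  A2: T_3 -> T_1,  A3: T_1 -> T_2,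
   and the fundamental group relation is A3 A2 A1 = 1. *)
definition goldman_pants ::
  "real^3^3 \<Rightarrow> real^3^3 \<Rightarrow> real^3^3 \<Rightarrow> real \<Rightarrow> real \<Rightarrow> real \<Rightarrow> real \<Rightarrow> real \<Rightarrow> real \<Rightarrow> bool" where
  "goldman_pants A1 A2 A3 a2 a3 b1 b3 c1 c2 \<longleftrightarrow>
     (let v1 = vector [-1, b1, c1] :: real^3;
          v2 = vector [a2, -1, c2] :: real^3;
          v3 = vector [a3, b3, -1] :: real^3 in
     0 < a2 \<and> 0 < a3 \<and> 0 < b1 \<and> 0 < b3 \<and> 0 < c1 \<and> 0 < c2 \<and>
     det A1 = 1 \<and> det A2 = 1 \<and> det A3 = 1 \<and>
     A3 ** A2 ** A1 = mat 1 \<and>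
     (\<exists>l r k. 0 < l \<and> 0 < r \<and> 0 < k \<and>
        A1 *v ee1 = l *\<^sub>R ee1 \<and> A1 *v v2 = r *\<^sub>R ee2 \<and> A1 *v ee3 = k *\<^sub>R v3) \<and>
     (\<exists>l r k. 0 < l \<and> 0 < r \<and> 0 < k \<and>
        A2 *v ee2 = l *\<^sub>R ee2 \<and> A2 *v v3 = r *\<^sub>R ee3 \<and> A2 *v ee1 = k *\<^sub>R v1) \<and>
     (\<exists>l r k. 0 < l \<and> 0 < r \<and> 0 < k \<and>
        A3 *v ee3 = l *\<^sub>R ee3 \<and> A3 *v v1 = r *\<^sub>R ee1 \<and> A3 *v ee2 = k *\<^sub>R v2))"

(* Fock--Goncharov triple ratio of T_+ with vertex flags F1 F2 F3 (clockwise). *)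
definition tau111_plus :: "flag \<Rightarrow> flag \<Rightarrow> flag \<Rightarrow> real" where
  "tau111_plus F1 F2 F3 =
     ln ((w2 F1 (fl F2) / w2 F3 (fl F2)) * (w2 F3 (fl F1) / w2 F2 (fl F1))
         * (w2 F2 (fl F3) / w2 F1 (fl F3)))"

(* Edge coordinates of an edge with flags Fp (positive endpoint), Fm (negative endpoint),
   F (third vertex of T_+) and line f' of the third vertex of T_- (its plane is not used). *)
definition sigma1 :: "flag \<Rightarrow> flag \<Rightarrow> flag \<Rightarrow> real^3 \<Rightarrow> real" where
  "sigma1 Fp Fm F f' =
     ln (- (vol3 (fl Fp) (fl Fm) (fl F) / vol3 (fl Fp) (fl Fm) f')
         * (w2 Fm f' / w2 Fm (fl F)))"

definition sigma2 :: "flag \<Rightarrow> flag \<Rightarrow> flag \<Rightarrow> real^3 \<Rightarrow> real" where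
  "sigma2 Fp Fm F f' =
     ln (- (vol3 (fl Fp) (fl Fm) f' / vol3 (fl Fp) (fl Fm) (fl F))
         * (w2 Fp (fl F) / w2 Fp f'))"

end

theory Submission imports Defs begin
lemma vol3_eq: "vol3 u v w = u$1*(v$2*w$3 - v$3*w$2) - u$2*(v$1*w$3 - v$3*w$1) + u$3*(v$1*w$2 - v$2*w$1)"
  by (simp add: vol3_def det_3 algebra_simps)
lemma mv_comp: "(A *v x) $ i = A$i$1*x$1 + A$i$2*x$2 + A$i$3*x$3" for A::"real^3^3"
  by (simp add: matrix_vector_mult_def sum_3)
lemma vec3_eq: "(x::real^3) = y \<longleftrightarrow> x$1 = y$1 \<and> x$2=y$2 \<and> x$3=y$3" by (simp add: vec_eq_iff forall_3)
lemma ee_simps: "ee1$1 = 1" "ee1$2 = 0" "ee1$3 = 0" "ee2$1 = 0" "ee2$2 = 1" "ee2$3 = 0" "ee3$1 = 0" "ee3$2 = 0" "ee3$3 = 1"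
  by (simp_all add: ee1_def ee2_def ee3_def)

lemma char2:
  fixes a b c d x p q :: real
  assumes "(a-x)*p + b*q = 0" "c*p + (d-x)*q = 0" "p \<noteq> 0 \<or> q \<noteq> 0"
  shows "x^2 - (a+d)*x + (a*d - b*c) = 0"
proof -
  have "((a-x)*(d-x) - b*c) * p = (d-x)*((a-x)*p + b*q) - b*(c*p + (d-x)*q)" by (simp add: algebra_simps)
  hence 1: "((a-x)*(d-x) - b*c) * p = 0" using assms(1,2) by simp
  have "((a-x)*(d-x) - b*c) * q = (a-x)*(c*p + (d-x)*q) - c*((a-x)*p + b*q)" by (simp add: algebra_simps)
  hence 2: "((a-x)*(d-x) - b*c) * q = 0" using assms(1,2) by simp
  from 1 2 assms(3) have "(a-x)*(d-x) - b*c = 0" by auto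
  thus ?thesis by (simp add: algebra_simps power2_eq_square)
qed

lemma roots2:
  fixes T D m n :: real
  assumes "m^2 - T*m + D = 0" "n^2 - T*n + D = 0" "m \<noteq> n"
  shows "T = m + n \<and> D = m*n"
proof -
  have "(m-n)*(m+n-T) = 0" using assms(1,2) by (simp add: algebra_simps power2_eq_square)
  hence "T = m + n" using assms(3) by simp
  thus ?thesis using assms(1) by (simp add: algebra_simps power2_eq_square)
qed

lemma divide_eq_helper: "(x::real) = c*d \<Longrightarrow> d \<noteq> 0 \<Longrightarrow> x/d = c" by simp

lemma ratio_helper:
  fixes y K z c k :: real
  assumes "y = -K*z/(c*k)" "c \<noteq> 0" "k \<noteq> 0" "K \<noteq> 0" "z \<noteq> 0" shows "-z/y = c*k/K"
proof -
  have hy: "y \<noteq> 0" using assms by simp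
  have e: "z = -(c*k*y)/K" using assms by (simp add: field_simps)
  show ?thesis using hy assms(2-4) by (simp add: e field_simps)
qed

lemma A1_facts:
  fixes A::"real^3^3"
  assumes e1: "A *v ee1 = l0 *\<^sub>R ee1" and v: "A *v vector [a2,-1,c2] = r *\<^sub>R ee2"
    and e3: "A *v ee3 = k *\<^sub>R vector [a3,b3,-1]"
    and det: "det A = 1" and eig: "unstable_data A ee1 y l m n" and pos: "0 < c2" "0 < k"
  shows "l0 = l \<and> l*r*k = 1 \<and> c2*k*b3 - r - k = m + n \<and> r*k = m*n \<and> c2*k*y$2 = -(k+m)*y$3 \<and> y$3 \<noteq> 0"
proof -
  have E: "A$1$1 = l0 \<and> A$2$1 = 0 \<and> A$3$1 = 0 \<and> A$1$3 = k*a3 \<and> A$2$3 = k*b3 \<and> A$3$3 = -k \<and> A$3$2 = -c2*k \<and> A$2$2 = c2*k*b3 - r"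
    using e1 v e3 by (simp add: vec3_eq mv_comp ee_simps) (simp add: algebra_simps)
  obtain z where z: "z \<noteq> 0" "A *v z = n *\<^sub>R z" and ly: "0 < l" "l < m" "m < n" "y \<noteq> 0"
     "A *v ee1 = l *\<^sub>R ee1" "A *v y = m *\<^sub>R y"
    using eig unfolding unstable_data_def by blast
  have ll: "l0 = l" using ly(5) e1 by (simp add: vec3_eq mv_comp ee_simps)
  have d: "l*r*k = 1" using det E ll by (simp add: det_3 algebra_simps)
  have y1: "l*y$1 + A$1$2*y$2 + A$1$3*y$3 = m*y$1" "A$2$2*y$2 + A$2$3*y$3 = m*y$2" "A$3$2*y$2 + A$3$3*y$3 = m*y$3"
    using ly(6) E ll by (simp_all add: vec3_eq mv_comp)
  have z1: "l*z$1 + A$1$2*z$2 + A$1$3*z$3 = n*z$1" "A$2$2*z$2 + A$2$3*z$3 = n*z$2" "A$3$2*z$2 + A$3$3*z$3 = n*z$3"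
    using z(2) E ll by (simp_all add: vec3_eq mv_comp)
  have ynz: "y$2 \<noteq> 0 \<or> y$3 \<noteq> 0"
  proof (rule ccontr)
    assume "\<not> ?thesis"
    hence "y$2 = 0" "y$3 = 0" by auto
    with y1(1) have "(l - m)*y$1 = 0" by (simp add: algebra_simps)
    hence "y$1 = 0" using ly by simp
    with \<open>y$2 = 0\<close> \<open>y$3 = 0\<close> ly(4) show False by (simp add: vec3_eq)
  qed
  have znz: "z$2 \<noteq> 0 \<or> z$3 \<noteq> 0"
  proof (rule ccontr)
    assume "\<not> ?thesis"
    hence "z$2 = 0" "z$3 = 0" by auto
    with z1(1) have "(l - n)*z$1 = 0" by (simp add: algebra_simps)
    hence "z$1 = 0" using ly by simp
    with \<open>z$2 = 0\<close> \<open>z$3 = 0\<close> z(1) show False by (simp add: vec3_eq)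
  qed
  have cm: "m^2 - (A$2$2 + A$3$3)*m + (A$2$2*A$3$3 - A$2$3*A$3$2) = 0"
    by (rule char2[OF _ _ ynz]) (use y1 in \<open>simp_all add: algebra_simps\<close>)
  have cn: "n^2 - (A$2$2 + A$3$3)*n + (A$2$2*A$3$3 - A$2$3*A$3$2) = 0"
    by (rule char2[OF _ _ znz]) (use z1 in \<open>simp_all add: algebra_simps\<close>)
  have R: "A$2$2 + A$3$3 = m + n \<and> A$2$2*A$3$3 - A$2$3*A$3$2 = m*n"
    using roots2[OF cm cn] ly by simp
  have tr: "c2*k*b3 - r - k = m + n" using R E by simp
  have dt: "r*k = m*n" using R E by (simp add: algebra_simps)
  have yr: "c2*k*y$2 = -(k+m)*y$3" using y1(3) E by (simp add: algebra_simps)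
  have y3: "y$3 \<noteq> 0"
  proof
    assume "y$3 = 0"
    with yr pos have "y$2 = 0" by simp
    with \<open>y$3 = 0\<close> ynz show False by simp
  qed
  show ?thesis using ll d tr dt yr y3 by simp
qed
lemma A2_facts:
  fixes A::"real^3^3"
  assumes e1: "A *v ee2 = l0 *\<^sub>R ee2" and v: "A *v vector [a3,b3,-1] = r *\<^sub>R ee3"
    and e3: "A *v ee1 = k *\<^sub>R vector [-1,b1,c1]"
    and det: "det A = 1" and eig: "unstable_data A ee2 y l m n" and pos: "0 < a3" "0 < k"
  shows "l0 = l \<and> l*r*k = 1 \<and> a3*k*c1 - r - k = m + n \<and> r*k = m*n \<and> a3*k*y$3 = -(k+m)*y$1 \<and> y$1 \<noteq> 0"
proof -
  have E: "A$2$2 = l0 \<and> A$1$2 = 0 \<and> A$3$2 = 0 \<and> A$1$1 = -k \<and> A$2$1 = k*b1 \<and> A$3$1 = k*c1 \<and> A$1$3 = -a3*k \<and> A$3$3 = a3*k*c1 - r"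
    using e1 v e3 by (simp add: vec3_eq mv_comp ee_simps) (simp add: algebra_simps)
  obtain z where z: "z \<noteq> 0" "A *v z = n *\<^sub>R z" and ly: "0 < l" "l < m" "m < n" "y \<noteq> 0"
     "A *v ee2 = l *\<^sub>R ee2" "A *v y = m *\<^sub>R y"
    using eig unfolding unstable_data_def by blast
  have ll: "l0 = l" using ly(5) e1 by (simp add: vec3_eq mv_comp ee_simps)
  have d: "l*r*k = 1" using det E ll by (simp add: det_3 algebra_simps)
  have y1: "A$2$1*y$1 + l*y$2 + A$2$3*y$3 = m*y$2" "A$1$1*y$1 + A$1$3*y$3 = m*y$1" "A$3$1*y$1 + A$3$3*y$3 = m*y$3"
    using ly(6) E ll by (simp_all add: vec3_eq mv_comp)
  have z1: "A$2$1*z$1 + l*z$2 + A$2$3*z$3 = n*z$2" "A$1$1*z$1 + A$1$3*z$3 = n*z$1" "A$3$1*z$1 + A$3$3*z$3 = n*z$3"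
    using z(2) E ll by (simp_all add: vec3_eq mv_comp)
  have ynz: "y$1 \<noteq> 0 \<or> y$3 \<noteq> 0"
  proof (rule ccontr)
    assume "\<not> ?thesis"
    hence "y$1 = 0" "y$3 = 0" by auto
    with y1(1) have "(l - m)*y$2 = 0" by (simp add: algebra_simps)
    hence "y$2 = 0" using ly by simp
    with \<open>y$1 = 0\<close> \<open>y$3 = 0\<close> ly(4) show False by (simp add: vec3_eq)
  qed
  have znz: "z$1 \<noteq> 0 \<or> z$3 \<noteq> 0"
  proof (rule ccontr)
    assume "\<not> ?thesis"
    hence "z$1 = 0" "z$3 = 0" by auto
    with z1(1) have "(l - n)*z$2 = 0" by (simp add: algebra_simps)
    hence "z$2 = 0" using ly by simp
    with \<open>z$1 = 0\<close> \<open>z$3 = 0\<close> z(1) show False by (simp add: vec3_eq)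
  qed
  have cm: "m^2 - (A$1$1 + A$3$3)*m + (A$1$1*A$3$3 - A$1$3*A$3$1) = 0"
    by (rule char2[OF _ _ ynz]) (use y1 in \<open>simp_all add: algebra_simps\<close>)
  have cn: "n^2 - (A$1$1 + A$3$3)*n + (A$1$1*A$3$3 - A$1$3*A$3$1) = 0"
    by (rule char2[OF _ _ znz]) (use z1 in \<open>simp_all add: algebra_simps\<close>)
  have R: "A$1$1 + A$3$3 = m + n \<and> A$1$1*A$3$3 - A$1$3*A$3$1 = m*n"
    using roots2[OF cm cn] ly by simp
  have tr: "a3*k*c1 - r - k = m + n" using R E by simp
  have dt: "r*k = m*n" using R E by (simp add: algebra_simps)
  have yr: "a3*k*y$3 = -(k+m)*y$1" using y1(2) E by (simp add: algebra_simps)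
  have y3: "y$1 \<noteq> 0"
  proof
    assume "y$1 = 0"
    with yr pos have "y$3 = 0" by simp
    with \<open>y$1 = 0\<close> ynz show False by simp
  qed
  show ?thesis using ll d tr dt yr y3 by simp
qed

lemma A3_facts:
  fixes A::"real^3^3"
  assumes e1: "A *v ee3 = l0 *\<^sub>R ee3" and v: "A *v vector [-1,b1,c1] = r *\<^sub>R ee1"
    and e3: "A *v ee2 = k *\<^sub>R vector [a2,-1,c2]"
    and det: "det A = 1" and eig: "unstable_data A ee3 y l m n" and pos: "0 < b1" "0 < k"
  shows "l0 = l \<and> l*r*k = 1 \<and> b1*k*a2 - r - k = m + n \<and> r*k = m*n \<and> b1*k*y$1 = -(k+m)*y$2 \<and> y$2 \<noteq> 0"
proof -
  have E: "A$3$3 = l0 \<and> A$1$3 = 0 \<and> A$2$3 = 0 \<and> A$1$2 = a2*k \<and> A$2$2 = -k \<and> A$3$2 = c2*k \<and> A$2$1 = -b1*k \<and> A$1$1 = b1*a2*k - r"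
    using e1 v e3 by (simp add: vec3_eq mv_comp ee_simps) (simp add: algebra_simps)
  obtain z where z: "z \<noteq> 0" "A *v z = n *\<^sub>R z" and ly: "0 < l" "l < m" "m < n" "y \<noteq> 0"
     "A *v ee3 = l *\<^sub>R ee3" "A *v y = m *\<^sub>R y"
    using eig unfolding unstable_data_def by blast
  have ll: "l0 = l" using ly(5) e1 by (simp add: vec3_eq mv_comp ee_simps)
  have d: "l*r*k = 1" using det E ll by (simp add: det_3 algebra_simps)
  have y1: "A$3$1*y$1 + A$3$2*y$2 + l*y$3 = m*y$3" "A$1$1*y$1 + A$1$2*y$2 = m*y$1" "A$2$1*y$1 + A$2$2*y$2 = m*y$2"
    using ly(6) E ll by (simp_all add: vec3_eq mv_comp)
  have z1: "A$3$1*z$1 + A$3$2*z$2 + l*z$3 = n*z$3" "A$1$1*z$1 + A$1$2*z$2 = n*z$1" "A$2$1*z$1 + A$2$2*z$2 = n*z$2"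
    using z(2) E ll by (simp_all add: vec3_eq mv_comp)
  have ynz: "y$1 \<noteq> 0 \<or> y$2 \<noteq> 0"
  proof (rule ccontr)
    assume "\<not> ?thesis"
    hence "y$1 = 0" "y$2 = 0" by auto
    with y1(1) have "(l - m)*y$3 = 0" by (simp add: algebra_simps)
    hence "y$3 = 0" using ly by simp
    with \<open>y$1 = 0\<close> \<open>y$2 = 0\<close> ly(4) show False by (simp add: vec3_eq)
  qed
  have znz: "z$1 \<noteq> 0 \<or> z$2 \<noteq> 0"
  proof (rule ccontr)
    assume "\<not> ?thesis"
    hence "z$1 = 0" "z$2 = 0" by auto
    with z1(1) have "(l - n)*z$3 = 0" by (simp add: algebra_simps)
    hence "z$3 = 0" using ly by simp
    with \<open>z$1 = 0\<close> \<open>z$2 = 0\<close> z(1) show False by (simp add: vec3_eq)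
  qed
  have cm: "m^2 - (A$1$1 + A$2$2)*m + (A$1$1*A$2$2 - A$1$2*A$2$1) = 0"
    by (rule char2[OF _ _ ynz]) (use y1 in \<open>simp_all add: algebra_simps\<close>)
  have cn: "n^2 - (A$1$1 + A$2$2)*n + (A$1$1*A$2$2 - A$1$2*A$2$1) = 0"
    by (rule char2[OF _ _ znz]) (use z1 in \<open>simp_all add: algebra_simps\<close>)
  have R: "A$1$1 + A$2$2 = m + n \<and> A$1$1*A$2$2 - A$1$2*A$2$1 = m*n"
    using roots2[OF cm cn] ly by simp
  have tr: "b1*k*a2 - r - k = m + n" using R E by (simp add: algebra_simps)
  have dt: "r*k = m*n" using R E by (simp add: algebra_simps)
  have yr: "b1*k*y$1 = -(k+m)*y$2" using y1(3) E by (simp add: algebra_simps)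
  have y3: "y$2 \<noteq> 0"
  proof
    assume "y$2 = 0"
    with yr pos have "y$1 = 0" by simp
    with \<open>y$2 = 0\<close> ynz show False by simp
  qed
  show ?thesis using ll d tr dt yr y3 by simp
qed


theorem proposition2:
  fixes A1 A2 A3 :: "real^3^3"
    and a2 a3 b1 b3 c1 c2 :: real
    and l1 m1 n1 l2 m2 n2 l3 m3 n3 :: real
    and y1 y2 y3 :: "real^3"
    and s :: real
  assumes struct: "goldman_pants A1 A2 A3 a2 a3 b1 b3 c1 c2"
    and eig1: "unstable_data A1 ee1 y1 l1 m1 n1"
    and eig2: "unstable_data A2 ee2 y2 l2 m2 n2"
    and eig3: "unstable_data A3 ee3 y3 l3 m3 n3"
    and s_pos: "0 < s"
    and s_def: "b3 * c2 = 1 + (m1 + n1) * sqrt (l1 * l3 / l2) * s + (l3 / l2) * s ^ 2"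
  shows "let F1 = (ee1, ee1, y1); F2 = (ee2, ee2, y2); F3 = (ee3, ee3, y3);
             v1 = vector [-1, b1, c1] :: real^3;
             v2 = vector [a2, -1, c2] :: real^3;
             v3 = vector [a3, b3, -1] :: real^3;
             s11 = sigma1 F2 F3 F1 v1; s12 = sigma1 F3 F1 F2 v2; s13 = sigma1 F1 F2 F3 v3;
             s21 = sigma2 F2 F3 F1 v1; s22 = sigma2 F3 F1 F2 v2; s23 = sigma2 F1 F2 F3 v3;
             t = a2 * b3 / a3
         in s = exp ((s11 + s12 + s13 - s21 - s22 - s23) / 6) \<and>
            t = exp (- tau111_plus F1 F2 F3) * (exp (- s22) + 1) * (exp (- s23) + 1)
                  * inverse (exp s13 + 1)"
proof -
  define v1 where "v1 = (vector [-1, b1, c1] :: real^3)"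
  define v2 where "v2 = (vector [a2, -1, c2] :: real^3)"
  define v3 where "v3 = (vector [a3, b3, -1] :: real^3)"
  from struct have P: "0 < a2" "0 < a3" "0 < b1" "0 < b3" "0 < c1" "0 < c2"
    "det A1 = 1" "det A2 = 1" "det A3 = 1" "A3 ** A2 ** A1 = mat 1"
    unfolding goldman_pants_def Let_def by auto
  from struct obtain l1' r1 k1 where Q1: "0 < l1'" "0 < r1" "0 < k1"
     "A1 *v ee1 = l1' *\<^sub>R ee1" "A1 *v v2 = r1 *\<^sub>R ee2" "A1 *v ee3 = k1 *\<^sub>R v3"
    unfolding goldman_pants_def Let_def v2_def v3_def by blast
  from struct obtain l2' r2 k2 where Q2: "0 < l2'" "0 < r2" "0 < k2"
     "A2 *v ee2 = l2' *\<^sub>R ee2" "A2 *v v3 = r2 *\<^sub>R ee3" "A2 *v ee1 = k2 *\<^sub>R v1"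
    unfolding goldman_pants_def Let_def v1_def v3_def by blast
  from struct obtain l3' r3 k3 where Q3: "0 < l3'" "0 < r3" "0 < k3"
     "A3 *v ee3 = l3' *\<^sub>R ee3" "A3 *v v1 = r3 *\<^sub>R ee1" "A3 *v ee2 = k3 *\<^sub>R v2"
    unfolding goldman_pants_def Let_def v1_def v2_def by blast
  have F1: "l1' = l1 \<and> l1*r1*k1 = 1 \<and> c2*k1*b3 - r1 - k1 = m1 + n1 \<and> r1*k1 = m1*n1 \<and> c2*k1*y1$2 = -(k1+m1)*y1$3 \<and> y1$3 \<noteq> 0"
    by (rule A1_facts[OF Q1(4) Q1(5)[unfolded v2_def] Q1(6)[unfolded v3_def] P(7) eig1 P(6) Q1(3)])
  have F2: "l2' = l2 \<and> l2*r2*k2 = 1 \<and> a3*k2*c1 - r2 - k2 = m2 + n2 \<and> r2*k2 = m2*n2 \<and> a3*k2*y2$3 = -(k2+m2)*y2$1 \<and> y2$1 \<noteq> 0"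
    by (rule A2_facts[OF Q2(4) Q2(5)[unfolded v3_def] Q2(6)[unfolded v1_def] P(8) eig2 P(2) Q2(3)])
  have F3: "l3' = l3 \<and> l3*r3*k3 = 1 \<and> b1*k3*a2 - r3 - k3 = m3 + n3 \<and> r3*k3 = m3*n3 \<and> b1*k3*y3$1 = -(k3+m3)*y3$2 \<and> y3$2 \<noteq> 0"
    by (rule A3_facts[OF Q3(4) Q3(5)[unfolded v1_def] Q3(6)[unfolded v2_def] P(9) eig3 P(3) Q3(3)])
  have pr1: "l1*k2*r3 = 1"
  proof -
    have "ee1 = (A3 ** A2 ** A1) *v ee1" using P(10) by simp
    also have "... = A3 *v (A2 *v (A1 *v ee1))" by (simp add: matrix_vector_mul_assoc matrix_mul_assoc)
    also have "... = (l1'*k2*r3) *\<^sub>R ee1" using Q1(4) Q2(6) Q3(5) by (simp add: matrix_vector_mult_scaleR)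
    finally have "(l1'*k2*r3) *\<^sub>R ee1 = ee1" by simp
    then have "l1'*k2*r3 = 1" by (simp add: vec3_eq ee_simps)
    with F1 show ?thesis by simp
  qed
  have pr2: "k1*r2*l3 = 1"
  proof -
    have "ee3 = (A3 ** A2 ** A1) *v ee3" using P(10) by simp
    also have "... = A3 *v (A2 *v (A1 *v ee3))" by (simp add: matrix_vector_mul_assoc matrix_mul_assoc)
    also have "... = (k1*r2*l3') *\<^sub>R ee3" using Q1(6) Q2(5) Q3(4) by (simp add: matrix_vector_mult_scaleR)
    finally have "(k1*r2*l3') *\<^sub>R ee3 = ee3" by simp
    then have "k1*r2*l3' = 1" by (simp add: vec3_eq ee_simps)
    with F3 show ?thesis by simp
  qed
  have pr3: "r1*l2*k3 = 1"
  proof -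
    have "v2 = (A3 ** A2 ** A1) *v v2" using P(10) by simp
    also have "... = A3 *v (A2 *v (A1 *v v2))" by (simp add: matrix_vector_mul_assoc matrix_mul_assoc)
    also have "... = (r1*l2'*k3) *\<^sub>R v2" using Q1(5) Q2(4) Q3(6) by (simp add: matrix_vector_mult_scaleR)
    finally have "(r1*l2'*k3) *\<^sub>R v2 = v2" by simp
    then have "r1*l2'*k3 = 1" by (simp add: vec3_eq v2_def)
    with F2 show ?thesis by simp
  qed
  have pos1: "0 < l1" "l1 < m1" "m1 < n1" using eig1 unfolding unstable_data_def by auto
  have pos2: "0 < l2" "l2 < m2" "m2 < n2" using eig2 unfolding unstable_data_def by auto
  have pos3: "0 < l3" "l3 < m3" "m3 < n3" using eig3 unfolding unstable_data_def by auto
  have W1: "\<And>x. w2 (ee1,ee1,y1) x = x$3*y1$2 - x$2*y1$3" by (simp add: w2_def vol3_eq ee_simps)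
  have W2: "\<And>x. w2 (ee2,ee2,y2) x = x$1*y2$3 - x$3*y2$1" by (simp add: w2_def vol3_eq ee_simps)
  have W3: "\<And>x. w2 (ee3,ee3,y3) x = x$2*y3$1 - x$1*y3$2" by (simp add: w2_def vol3_eq ee_simps)
  have V: "vol3 ee2 ee3 ee1 = 1" "vol3 ee2 ee3 v1 = -1" "vol3 ee3 ee1 ee2 = 1" "vol3 ee3 ee1 v2 = -1"
     "vol3 ee1 ee2 ee3 = 1" "vol3 ee1 ee2 v3 = -1"
    by (simp_all add: vol3_eq ee_simps v1_def v2_def v3_def)
  have w3v1: "w2 (ee3,ee3,y3) v1 = b1*y3$1 + y3$2" by (simp add: W3 v1_def)
  have w3e1: "w2 (ee3,ee3,y3) ee1 = -y3$2" by (simp add: W3 ee_simps)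
  have w1v2: "w2 (ee1,ee1,y1) v2 = c2*y1$2 + y1$3" by (simp add: W1 v2_def)
  have w1e2: "w2 (ee1,ee1,y1) ee2 = -y1$3" by (simp add: W1 ee_simps)
  have w2v3: "w2 (ee2,ee2,y2) v3 = a3*y2$3 + y2$1" by (simp add: W2 v3_def)
  have w2e3: "w2 (ee2,ee2,y2) ee3 = -y2$1" by (simp add: W2 ee_simps)
  have w2e1: "w2 (ee2,ee2,y2) ee1 = y2$3" by (simp add: W2 ee_simps)
  have w2v1: "w2 (ee2,ee2,y2) v1 = -y2$3 - c1*y2$1" by (simp add: W2 v1_def)
  have w3e2: "w2 (ee3,ee3,y3) ee2 = y3$1" by (simp add: W3 ee_simps)
  have w3v2: "w2 (ee3,ee3,y3) v2 = -y3$1 - a2*y3$2" by (simp add: W3 v2_def)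
  have w1e3: "w2 (ee1,ee1,y1) ee3 = y1$2" by (simp add: W1 ee_simps)
  have w1v3: "w2 (ee1,ee1,y1) v3 = -y1$2 - b3*y1$3" by (simp add: W1 v3_def)
  have e1: "y1$2 = -(k1+m1)*y1$3/(c2*k1)" using F1 P Q1 by (simp add: field_simps)
  have e2: "y2$3 = -(k2+m2)*y2$1/(a3*k2)" using F2 P Q2 by (simp add: field_simps)
  have e3: "y3$1 = -(k3+m3)*y3$2/(b1*k3)" using F3 P Q3 by (simp add: field_simps)
  have nz: "y1$3 \<noteq> 0" "y2$1 \<noteq> 0" "y3$2 \<noteq> 0" using F1 F2 F3 by auto
  have r11: "(b1*y3$1 + y3$2)/(-y3$2) = m3/k3" using nz P Q3 by (simp add: e3 field_simps)
  have r12: "(c2*y1$2 + y1$3)/(-y1$3) = m1/k1" using nz P Q1 by (simp add: e1 field_simps)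
  have r13: "(a3*y2$3 + y2$1)/(-y2$1) = m2/k2" using nz P Q2 by (simp add: e2 field_simps)
  have d21: "-y2$3 - c1*y2$1 = -y2$1 * n2*(k2+m2)/(a3*k2^2)"
  proof -
    have "-y2$3 - c1*y2$1 = (k2+m2-c1*a3*k2)*y2$1/(a3*k2)" using nz P Q2 by (simp add: e2 field_simps)
    also have "k2+m2-c1*a3*k2 = - n2*(k2+m2)/k2" using F2 Q2 by (simp add: field_simps)
    finally show ?thesis using P Q2 by (simp add: field_simps power2_eq_square)
  qed
  have d22: "-y3$1 - a2*y3$2 = -y3$2 * n3*(k3+m3)/(b1*k3^2)"
  proof -
    have "-y3$1 - a2*y3$2 = (k3+m3-a2*b1*k3)*y3$2/(b1*k3)" using nz P Q3 by (simp add: e3 field_simps)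
    also have "k3+m3-a2*b1*k3 = - n3*(k3+m3)/k3" using F3 Q3 by (simp add: field_simps)
    finally show ?thesis using P Q3 by (simp add: field_simps power2_eq_square)
  qed
  have d23: "-y1$2 - b3*y1$3 = -y1$3 * n1*(k1+m1)/(c2*k1^2)"
  proof -
    have "-y1$2 - b3*y1$3 = (k1+m1-b3*c2*k1)*y1$3/(c2*k1)" using nz P Q1 by (simp add: e1 field_simps)
    also have "k1+m1-b3*c2*k1 = - n1*(k1+m1)/k1" using F1 Q1 by (simp add: field_simps)
    finally show ?thesis using P Q1 by (simp add: field_simps power2_eq_square)
  qed
  have r21: "y2$3/(-y2$3 - c1*y2$1) = k2/n2"
    unfolding d21
  proof (rule divide_eq_helper)
    show "y2$3 = (k2/n2) * (-y2$1 * n2*(k2+m2)/(a3*k2^2))"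
      using nz P Q2 pos2 by (simp add: e2 field_simps power2_eq_square)
    show "-y2$1 * n2*(k2+m2)/(a3*k2^2) \<noteq> 0"
      using nz P Q2 pos2 by (simp add: add_pos_pos)
  qed
  have r22: "y3$1/(-y3$1 - a2*y3$2) = k3/n3"
    unfolding d22
  proof (rule divide_eq_helper)
    show "y3$1 = (k3/n3) * (-y3$2 * n3*(k3+m3)/(b1*k3^2))"
      using nz P Q3 pos3 by (simp add: e3 field_simps power2_eq_square)
    show "-y3$2 * n3*(k3+m3)/(b1*k3^2) \<noteq> 0"
      using nz P Q3 pos3 by (simp add: add_pos_pos)
  qed
  have r23: "y1$2/(-y1$2 - b3*y1$3) = k1/n1"
    unfolding d23
  proof (rule divide_eq_helper)
    show "y1$2 = (k1/n1) * (-y1$3 * n1*(k1+m1)/(c2*k1^2))"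
      using nz P Q1 pos1 by (simp add: e1 field_simps power2_eq_square)
    show "-y1$3 * n1*(k1+m1)/(c2*k1^2) \<noteq> 0"
      using nz P Q1 pos1 by (simp add: add_pos_pos)
  qed
  have km: "k1+m1 > 0" "k2+m2 > 0" "k3+m3 > 0" using Q1 Q2 Q3 pos1 pos2 pos3 by auto
  have nz2: "y1$2 \<noteq> 0" "y2$3 \<noteq> 0" "y3$1 \<noteq> 0" using nz P Q1 Q2 Q3 km by (simp_all add: e1 e2 e3)
  have f1: "-y1$3/y1$2 = c2*k1/(k1+m1)"
    by (rule ratio_helper[OF e1]) (use P Q1 km nz in auto)
  have f2: "-y2$1/y2$3 = a3*k2/(k2+m2)"
    by (rule ratio_helper[OF e2]) (use P Q2 km nz in auto)
  have f3: "-y3$2/y3$1 = b1*k3/(k3+m3)"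
    by (rule ratio_helper[OF e3]) (use P Q3 km nz in auto)
  have rt: "(-y1$3/y3$1)*(-y3$2/y2$3)*(-y2$1/y1$2) = c2*k1*b1*k3*a3*k2/((k3+m3)*(k2+m2)*(k1+m1))"
  proof -
    have "(-y1$3/y3$1)*(-y3$2/y2$3)*(-y2$1/y1$2) = (-y1$3/y1$2)*(-y2$1/y2$3)*(-y3$2/y3$1)"
      using nz2 by (simp add: field_simps)
    also have "... = c2*k1*b1*k3*a3*k2/((k3+m3)*(k2+m2)*(k1+m1))"
      unfolding f1 f2 f3 using km by (simp add: field_simps)
    finally show ?thesis .
  qed
  have s11: "sigma1 (ee2,ee2,y2) (ee3,ee3,y3) (ee1,ee1,y1) v1 = ln (m3/k3)"
    unfolding sigma1_def fl_def fst_conv w3v1 w3e1 V r11 by simp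
  have s12: "sigma1 (ee3,ee3,y3) (ee1,ee1,y1) (ee2,ee2,y2) v2 = ln (m1/k1)"
    unfolding sigma1_def fl_def fst_conv w1v2 w1e2 V r12 by simp
  have s13: "sigma1 (ee1,ee1,y1) (ee2,ee2,y2) (ee3,ee3,y3) v3 = ln (m2/k2)"
    unfolding sigma1_def fl_def fst_conv w2v3 w2e3 V r13 by simp
  have s21: "sigma2 (ee2,ee2,y2) (ee3,ee3,y3) (ee1,ee1,y1) v1 = ln (k2/n2)"
    unfolding sigma2_def fl_def fst_conv w2e1 w2v1 V r21 by simp
  have s22: "sigma2 (ee3,ee3,y3) (ee1,ee1,y1) (ee2,ee2,y2) v2 = ln (k3/n3)"
    unfolding sigma2_def fl_def fst_conv w3e2 w3v2 V r22 by simp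
  have s23: "sigma2 (ee1,ee1,y1) (ee2,ee2,y2) (ee3,ee3,y3) v3 = ln (k1/n1)"
    unfolding sigma2_def fl_def fst_conv w1e3 w1v3 V r23 by simp
  have tau: "tau111_plus (ee1,ee1,y1) (ee2,ee2,y2) (ee3,ee3,y3) = ln (c2*k1*b1*k3*a3*k2/((k3+m3)*(k2+m2)*(k1+m1)))"
    unfolding tau111_plus_def fl_def fst_conv w1e2 w3e2 w3e1 w2e1 w2e3 w1e3 rt by simp
  have h1: "l1*k1 = l2*k3"
  proof -
    have "r1*(l1*k1) = r1*(l2*k3)" using F1 pr3 by (simp add: algebra_simps)
    thus ?thesis using Q1 by simp
  qed
  have h2: "l3*k1 = l2*k2"
  proof -
    have "r2*(l3*k1) = r2*(l2*k2)" using F2 pr2 by (simp add: algebra_simps)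
    thus ?thesis using Q2 by simp
  qed
  define q where "q = sqrt (l1*l3/l2)"
  have q2: "q^2 = l1*l3/l2" unfolding q_def using pos1 pos2 pos3 by simp
  have qpos: "0 < q" unfolding q_def using pos1 pos2 pos3 by simp
  have u1: "q * s * k1 = 1"
  proof -
    define u where "u = q * s * k1"
    have upos: "0 < u" unfolding u_def using qpos s_pos Q1 by simp
    have a: "r1*u^2 = (l3/l2) * s^2*k1"
    proof -
      have "r1*u^2 = r1*q^2 * s^2*k1^2" unfolding u_def by (simp add: power_mult_distrib)
      also have "... = (l1*r1*k1)*(l3/l2) * s^2*k1" unfolding q2 by (simp add: power2_eq_square)
      also have "... = (l3/l2) * s^2*k1" using F1 by simp
      finally show ?thesis .
    qed
    have b0: "k1*(b3*c2) = k1 + (m1+n1)*(q * s * k1) + (l3/l2) * s^2*k1"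
      unfolding s_def q_def[symmetric] by (simp add: algebra_simps)
    have b: "k1*(b3*c2) = k1 + (m1+n1)*u + r1*u^2"
      using b0 a by (simp add: u_def)
    have tr1: "k1*(b3*c2) = m1+n1+r1+k1" using F1 by (simp add: algebra_simps)
    have "(1-u)*((m1+n1) + r1*(1+u)) = 0" using b tr1 by (simp add: algebra_simps power2_eq_square)
    moreover have "(m1+n1) + r1*(1+u) > 0" using pos1 Q1 upos by (simp add: add_pos_pos)
    ultimately have "u = 1" by simp
    thus ?thesis unfolding u_def .
  qed
  have ssq: "s^2 = 1/(l2*k2*k3)"
  proof -
    have "s = 1/(q*k1)" using u1 qpos Q1 by (simp add: field_simps)
    hence "s^2 = 1/(q^2*k1^2)" by (simp add: power_mult_distrib power_divide)
    also have "... = l2/((l1*k1)*(l3*k1))" unfolding q2 using pos1 pos2 pos3 by (simp add: field_simps power2_eq_square)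
    also have "... = 1/(l2*k2*k3)" unfolding h1 h2 using pos2 Q2 Q3 by (simp add: field_simps)
    finally show ?thesis .
  qed
  have Eq: "(m3/k3)*(m1/k1)*(m2/k2)/((k2/n2)*(k3/n3)*(k1/n1)) = (1/(l2*k2*k3))^3"
  proof -
    have "(m3/k3)*(m1/k1)*(m2/k2)/((k2/n2)*(k3/n3)*(k1/n1)) = (m1*n1)*(m2*n2)*(m3*n3)/((k1*k2*k3)^2)"
      using Q1 Q2 Q3 pos1 pos2 pos3 by (simp add: field_simps power2_eq_square)
    also have "... = (r1*k1)*(r2*k2)*(r3*k3)/((k1*k2*k3)^2)" using F1 F2 F3 by simp
    also have "... = 1/((l1*k1)*(l2*k2)*((l3*k1)*k3)*(k2*k3))"
    proof -
      have rr: "r1 = 1/(l1*k1)" "r2 = 1/(l2*k2)" "r3 = 1/(l3*k3)" using F1 F2 F3 Q1 Q2 Q3 pos1 pos2 pos3 by (auto simp: field_simps)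
      show ?thesis unfolding rr using Q1 Q2 Q3 pos1 pos2 pos3 by (simp add: field_simps power2_eq_square)
    qed
    also have "... = (1/(l2*k2*k3))^3" unfolding h1 h2 by (simp add: field_simps power3_eq_cube)
    finally show ?thesis .
  qed
  have six: "s^6 = (m3/k3)*(m1/k1)*(m2/k2)/((k2/n2)*(k3/n3)*(k1/n1))"
  proof -
    have "s^6 = (s^2)^3" by (simp add: power_mult[symmetric])
    thus ?thesis unfolding Eq ssq .
  qed
  define S where "S = ln (m3/k3) + ln (m1/k1) + ln (m2/k2) - ln (k2/n2) - ln (k3/n3) - ln (k1/n1)"
  have expS: "exp S = (m3/k3)*(m1/k1)*(m2/k2)/((k2/n2)*(k3/n3)*(k1/n1))"
    unfolding S_def using Q1 Q2 Q3 pos1 pos2 pos3 by (simp add: exp_add exp_diff)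
  have part1: "s = exp (S/6)"
  proof -
    have "exp (S/6) ^ 6 = exp (of_nat 6 * (S/6))" by (rule exp_of_nat_mult[symmetric])
    also have "... = exp S" by simp
    also have "... = s^6" using six expS by simp
    finally have "exp (S/6) ^ 6 = s ^ 6" .
    thus ?thesis using s_pos by (simp add: power_eq_iff_eq_base)
  qed
  define K1 where "K1 = k1+m1"
  define K2 where "K2 = k2+m2"
  define K3 where "K3 = k3+m3"
  define N1 where "N1 = n1+k1"
  define N3 where "N3 = n3+k3"
  have Kp: "K1 > 0" "K2 > 0" "K3 > 0" "N1 > 0" "N3 > 0" unfolding K1_def K2_def K3_def N1_def N3_def
    using Q1 Q2 Q3 pos1 pos2 pos3 by auto
  have q1: "K1*N1 = k1^2*c2*b3"
  proof -
    have dd: "m1*n1 = r1*k1" "k1+m1+n1+r1 = c2*k1*b3" using F1 by (simp_all add: algebra_simps)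
    have "K1*N1 = k1*(k1+m1+n1+r1) + (m1*n1 - r1*k1)" unfolding K1_def N1_def by (simp add: algebra_simps)
    also have "... = k1*(c2*k1*b3)" unfolding dd by simp
    also have "... = k1^2*c2*b3" by (simp add: power2_eq_square)
    finally show ?thesis .
  qed
  have q3: "K3*N3 = k3^2*b1*a2"
  proof -
    have dd: "m3*n3 = r3*k3" "k3+m3+n3+r3 = b1*k3*a2" using F3 by (simp_all add: algebra_simps)
    have "K3*N3 = k3*(k3+m3+n3+r3) + (m3*n3 - r3*k3)" unfolding K3_def N3_def by (simp add: algebra_simps)
    also have "... = k3*(b1*k3*a2)" unfolding dd by simp
    also have "... = k3^2*b1*a2" by (simp add: power2_eq_square)
    finally show ?thesis .
  qed
  have x1: "exp (- ln (c2*k1*b1*k3*a3*k2/((k3+m3)*(k2+m2)*(k1+m1)))) = K3*K2*K1/(c2*k1*b1*k3*a3*k2)"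
    unfolding K1_def[symmetric] K2_def[symmetric] K3_def[symmetric]
    using P Q1 Q2 Q3 Kp by (simp add: exp_minus)
  have x2: "exp (- ln (k3/n3)) + 1 = N3/k3" unfolding N3_def using Q3 pos3 by (simp add: exp_minus field_simps)
  have x3: "exp (- ln (k1/n1)) + 1 = N1/k1" unfolding N1_def using Q1 pos1 by (simp add: exp_minus field_simps)
  have x4: "inverse (exp (ln (m2/k2)) + 1) = k2/K2" unfolding K2_def using Q2 pos2 by (simp add: field_simps)
  have part2: "a2*b3/a3 = exp (- ln (c2*k1*b1*k3*a3*k2/((k3+m3)*(k2+m2)*(k1+m1)))) * (exp (- ln (k3/n3)) + 1)
      * (exp (- ln (k1/n1)) + 1) * inverse (exp (ln (m2/k2)) + 1)"
  proof -
    have "K3*K2*K1/(c2*k1*b1*k3*a3*k2) * (N3/k3) * (N1/k1) * (k2/K2) = (K1*N1)*(K3*N3)/(c2*b1*a3*k1^2*k3^2)"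
      using P Q1 Q2 Q3 Kp by (simp add: field_simps power2_eq_square)
    also have "... = a2*b3/a3" unfolding q1 q3 using P Q1 Q3 by (simp add: field_simps power2_eq_square)
    finally show ?thesis unfolding x1 x2 x3 x4 by simp
  qed
  show ?thesis
    unfolding Let_def v1_def[symmetric] v2_def[symmetric] v3_def[symmetric] s11 s12 s13 s21 s22 s23 tau
    using part1 part2 unfolding S_def by simp
qed

end
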